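(* Let $n \ge 1$, let $0 < \alpha < \beta < \pi/2$, and set $\lambda = \frac{\cos\beta}{\cos\alpha}$, $\mu = \frac{\tan\alpha}{\tan\beta}$. Define $\Psi : \mathbf{R}^n \to \mathbf{R}^n$ by \[ \Psi(x_1,\dots,x_n) = \left(\lambda x_1,\dots,\lambda x_{n-1}, \lambda\mu x_n + \sqrt{(1-\lambda^2)(1-\mu^2)}\right). \] Then: (a) $\Psi$ is an affine bijection with $\Psi(B_n) \subset B_n$; (b) if $x \in E_{n,\alpha}$ then $\Psi(x) \in E_{n,\beta}$; (c) if $x,y \in E_{n,\alpha}$ then $\|\Psi(x)-\Psi(y)\| = \lambda\|x-y\|$; (d) if $x \in B_n$ satisfies $\Psi(x) \in S^{n-1}$, then $x \in E_{n,\alpha}$.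
   Context: $B_n$ is the closed Euclidean unit ball of $\mathbf{R}^n$, $S^{n-1}$ its boundary, $\|\cdot\|$ the Euclidean norm. For $\theta \in [-\pi/2,\pi/2]$, $E_{n,\theta} = \{(x_1,\dots,x_n) \in S^{n-1} : x_n = \sin\theta\}$. *)

theory Defs
  imports "HOL-Analysis.Analysis"
begin

text \<open>Points of R^n are vectors of type real^'n, where the finite, linearly
ordered index type 'n has n elements; the coordinates x_1,...,x_n are listed in
the order of 'n, so the last coordinate x_n is indexed by the greatest index.\<close>

definition lastidx :: "'n::{finite,linorder}" where
  "lastidx = Max UNIV"

definition Eset :: "real \<Rightarrow> (real^('n::{finite,linorder})) set" where
  "Eset \<theta> = {x. x \<in> sphere 0 1 \<and> x $ lastidx = sin \<theta>}"

definition lam :: "real \<Rightarrow> real \<Rightarrow> real" where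
  "lam \<alpha> \<beta> = cos \<beta> / cos \<alpha>"

definition mu :: "real \<Rightarrow> real \<Rightarrow> real" where
  "mu \<alpha> \<beta> = tan \<alpha> / tan \<beta>"

definition Psi :: "real \<Rightarrow> real \<Rightarrow> (real^('n::{finite,linorder})) \<Rightarrow> (real^('n::{finite,linorder}))" where
  "Psi \<alpha> \<beta> x = (\<chi> i. if i = lastidx
      then lam \<alpha> \<beta> * mu \<alpha> \<beta> * x $ i + sqrt ((1 - (lam \<alpha> \<beta>)\<^sup>2) * (1 - (mu \<alpha> \<beta>)\<^sup>2))
      else lam \<alpha> \<beta> * x $ i)"

end

theory Submission
  imports Defs
begin

lemma norm_split_last:
  fixes x :: "real^('n::{finite,linorder})"
  shows "(norm x)\<^sup>2 = (\<Sum>i\<in>-{lastidx}. (x$i)\<^sup>2) + (x$lastidx)\<^sup>2"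
proof -
  have "(norm x)\<^sup>2 = inner x x" by (rule power2_norm_eq_inner)
  also have "\<dots> = (\<Sum>i\<in>UNIV. (x$i)\<^sup>2)"
    unfolding inner_vec_def by (simp add: power2_eq_square)
  also have "\<dots> = (x$lastidx)\<^sup>2 + (\<Sum>i\<in>UNIV - {lastidx}. (x$i)\<^sup>2)"
    by (rule sum.remove) auto
  finally show ?thesis by (simp add: Compl_eq_Diff_UNIV)
qed

lemma AB:
  fixes p u q v :: real
  assumes "u > 0" "v > 0" "p > 0" "q > p" "p^2 + u^2 = 1" "q^2 + v^2 = 1"
  shows "1 - (v/u)\<^sup>2 = (q^2-p^2)/u^2" "1 - (p* v/(u* q))\<^sup>2 = (q^2-p^2)/(u^2* q^2)"
proof -
    have ca2: "u^2 = 1 - p^2" and cb2: "v^2 = 1 - q^2" using assms by auto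
    show A: "(1 - (v/u)\<^sup>2) = (q^2-p^2)/u^2"
    proof -
      have "u^2 - v^2 = q^2 - p^2" using ca2 cb2 by simp
      moreover have "u^2 > 0" using assms by simp
      moreover have "(v/u)\<^sup>2 = v^2/u^2" by (simp add: power_divide)
      ultimately show ?thesis by (simp add: field_simps)
    qed
    show B: "(1 - (p* v/(u* q))\<^sup>2) = (q^2-p^2)/(u^2* q^2)"
    proof -
      have "u^2 * q^2 - p^2 * v^2 = q^2 - p^2" unfolding ca2 cb2 by (simp add: algebra_simps)
      moreover have "u^2 * q^2 > 0" using assms by simp
      moreover have "(p * v/(u * q))\<^sup>2 = p^2 * v^2/(u^2 * q^2)" by (simp add: power_divide power_mult_distrib)
      ultimately show ?thesis
        by (metis (no_types, lifting) add_diff_cancel_left' diff_add_cancel divide_self_if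
            less_irrefl add_divide_distrib)
    qed
qed

theorem lemma6:
  fixes \<alpha> \<beta> :: real
    and \<Psi> :: "real^('n::{finite,linorder}) \<Rightarrow> real^('n::{finite,linorder})"
  defines "\<Psi> \<equiv> Psi \<alpha> \<beta>"
  assumes "0 < \<alpha>" and "\<alpha> < \<beta>" and "\<beta> < pi / 2"
  shows "((\<exists>f c. linear f \<and> (\<forall>x. \<Psi> x = f x + c)) \<and> bij \<Psi> \<and>
          \<Psi> ` cball 0 1 \<subseteq> cball 0 1)
       \<and> (\<forall>x \<in> Eset \<alpha>. \<Psi> x \<in> Eset \<beta>)
       \<and> (\<forall>x \<in> Eset \<alpha>. \<forall>y \<in> Eset \<alpha>.
            norm (\<Psi> x - \<Psi> y) = lam \<alpha> \<beta> * norm (x - y))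
       \<and> (\<forall>x \<in> cball 0 1. \<Psi> x \<in> sphere 0 1 \<longrightarrow> x \<in> Eset \<alpha>)"
proof -
  define p where "p = sin \<alpha>"
  define q where "q = sin \<beta>"
  define u where "u = cos \<alpha>"
  define v where "v = cos \<beta>"
  define L where "L = v/u"
  define M where "M = p* v/(u* q)"
  define K where "K = (q^2 - p^2)/(u^2* q)"
  define l where "l = (lastidx :: 'n)"
  have u: "u > 0" unfolding u_def using assms by (intro cos_gt_zero_pi) auto
  have v: "v > 0" unfolding v_def using assms by (intro cos_gt_zero_pi) auto
  have p: "p > 0" unfolding p_def using assms by (intro sin_gt_zero) auto
  have pq: "p < q" unfolding p_def q_def using assms by (intro sin_monotone_2pi) auto
  have p1: "p^2 + u^2 = 1" "q^2 + v^2 = 1" unfolding p_def q_def u_def v_def by auto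
  have LL: "lam \<alpha> \<beta> = L" unfolding lam_def L_def u_def v_def ..
  have MM: "mu \<alpha> \<beta> = M" unfolding mu_def M_def tan_def p_def q_def u_def v_def
    by (simp add: field_simps)
  have hA: "1 - L^2 = (q^2-p^2)/u^2" and hB: "1 - M^2 = (q^2-p^2)/(u^2 * q^2)"
    unfolding L_def M_def using AB[OF u v p pq p1] by auto
  have Dpos: "q^2 - p^2 > 0" using p pq by (simp add: power_strict_mono)
  have KK2: "K^2 = (1 - L^2) * (1 - M^2)" unfolding hA hB K_def using u p pq
    by (simp add: power2_eq_square)
  have Kpos: "K > 0" unfolding K_def using Dpos u p pq by simp
  have KK: "sqrt ((1 - L\<^sup>2) * (1 - M\<^sup>2)) = K"
    using KK2 Kpos by (metis real_sqrt_abs abs_of_nonneg less_imp_le)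
  have Psi_eq: "\<Psi> x $ i = (if i = l then L* M* x$i + K else L * x$i)" for x i
    unfolding \<Psi>_def Psi_def LL MM KK l_def by simp
  have Lpos: "L > 0" and Mpos: "M > 0" using u v p pq unfolding L_def M_def by auto
  have uq: "u \<noteq> 0" "q \<noteq> 0" using u p pq by auto
  have LMK: "L * M * K = L^2 * (1 - M^2) * p"
    unfolding hB unfolding L_def M_def K_def using uq by (simp add: field_simps power2_eq_square)
  have LK: "L^2 + K^2 = 1 - L^2 * (1 - M^2) * p^2"
  proof -
    have v2: "v^2 = 1 - q^2" and u2: "u^2 = 1 - p^2" using p1 by auto
    have "L^2 = v^2/u^2" unfolding L_def by (simp add: power_divide)
    have e1: "L^2 - M^2 = (q^2-p^2)/(u^2 * q^2) - (q^2-p^2)/u^2"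
      using hA hB by (simp add: algebra_simps)
    also have "\<dots> = (q^2-p^2) * (1 - q^2)/(u^2 * q^2)"
      using uq by (simp add: field_simps)
    also have "\<dots> = L^2 * (1 - M^2) * u^2"
      unfolding hB \<open>L^2 = v^2/u^2\<close> v2 using uq by (simp add: field_simps)
    finally have "L^2 - M^2 = L^2 * (1 - M^2) * u^2" .
    thus ?thesis unfolding KK2 u2 by (simp add: algebra_simps)
  qed
  have key: "L^2 * (1 - t^2) + (L * M * t + K)^2 = 1 - L^2 * (1 - M^2) * (t - p)^2" for t
  proof -
    have "L^2 * (1 - t^2) + (L * M * t + K)^2 = (L^2 + K^2) - L^2 * (1 - M^2) * t^2 + 2 * (L * M * K) * t"
      by (simp add: algebra_simps power2_eq_square)
    also have "\<dots> = 1 - L^2 * (1 - M^2) * (t - p)^2" unfolding LK LMK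
      by (simp add: algebra_simps power2_eq_square)
    finally show ?thesis .
  qed
  have cpos: "L^2 * (1 - M^2) > 0" using Lpos hB Dpos uq by simp
  have nPsi: "(norm (\<Psi> x))\<^sup>2 = L^2 * (\<Sum>i\<in>-{l}. (x$i)\<^sup>2) + (L * M * x$l + K)^2" for x
    unfolding norm_split_last[of "\<Psi> x"] l_def[symmetric]
    by (simp add: Psi_eq power_mult_distrib sum_distrib_left)
  have nx: "(norm x)\<^sup>2 = (\<Sum>i\<in>-{l}. (x$i)\<^sup>2) + (x$l)\<^sup>2" for x :: "real^('n::{finite,linorder})"
    unfolding l_def by (rule norm_split_last)
  have ineq: "(norm (\<Psi> x))\<^sup>2 \<le> 1 - L^2 * (1 - M^2) * (x$l - p)^2"
    if "norm x \<le> 1" for x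
  proof -
    have "(norm x)^2 \<le> 1" using that by (simp add: abs_square_le_1)
    hence "(\<Sum>i\<in>-{l}. (x$i)\<^sup>2) \<le> 1 - (x$l)^2" using nx[of x] by simp
    hence "(norm (\<Psi> x))\<^sup>2 \<le> L^2 * (1 - (x$l)^2) + (L * M * x$l + K)^2"
      unfolding nPsi using Lpos by (simp add: mult_left_mono)
    thus ?thesis using key[of "x$l"] by simp
  qed
  have n1: "norm y \<le> 1" if "(norm y)^2 \<le> 1" for y :: "real^('n::{finite,linorder})"
    using that by (metis abs_norm_cancel abs_square_le_1)
  have part_a1: "\<exists>f c. linear f \<and> (\<forall>x. \<Psi> x = f x + c)"
  proof (intro exI conjI allI)
    show "linear (\<lambda>x::real^('n::{finite,linorder}). \<chi> i. if i = l then L * M * x$i else L * x$i)"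
      by (rule linearI) (simp_all add: vec_eq_iff algebra_simps)
    show "\<Psi> x = (\<chi> i. if i = l then L * M * x$i else L * x$i) + (\<chi> i. if i = l then K else 0)" for x
      by (simp add: vec_eq_iff Psi_eq)
  qed
  have part_bij: "bij \<Psi>"
  proof (rule o_bij[where g = "\<lambda>y. \<chi> i. if i = l then (y$i - K)/(L * M) else y$i/L"])
    show "(\<lambda>y. \<chi> i. if i = l then (y$i - K)/(L * M) else y$i/L) \<circ> \<Psi> = id"
      using Lpos Mpos by (simp add: fun_eq_iff vec_eq_iff Psi_eq)
    show "\<Psi> \<circ> (\<lambda>y. \<chi> i. if i = l then (y$i - K)/(L * M) else y$i/L) = id"
      using Lpos Mpos by (simp add: fun_eq_iff vec_eq_iff Psi_eq)
  qed
  have part_ball: "\<Psi> ` cball 0 1 \<subseteq> cball 0 1"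
  proof
    fix y assume "y \<in> \<Psi> ` cball 0 1"
    then obtain x where x: "norm x \<le> 1" "y = \<Psi> x" by auto
    have "(norm y)^2 \<le> 1" using ineq[OF x(1)] cpos x(2)
      by (smt (verit) mult_nonneg_nonneg zero_le_power2)
    thus "y \<in> cball 0 1" using n1 by simp
  qed
  have Eq: "x \<in> Eset \<theta> \<longleftrightarrow> norm x = 1 \<and> x$l = sin \<theta>" for x :: "real^('n::{finite,linorder})" and \<theta>
    unfolding Eset_def l_def by simp
  have part_b: "\<forall>x \<in> Eset \<alpha>. \<Psi> x \<in> Eset \<beta>"
  proof
    fix x :: "real^('n::{finite,linorder})" assume "x \<in> Eset \<alpha>"
    hence x: "norm x = 1" "x$l = p" unfolding Eq p_def by auto
    have S: "(\<Sum>i\<in>-{l}. (x$i)\<^sup>2) = u^2" using nx[of x] x p1 by simp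
    have last: "L * M * p + K = q"
    proof -
      have "L * M * p + K = (p^2 * v^2 + (q^2 - p^2))/(u^2 * q)"
        unfolding L_def M_def K_def using uq by (simp add: field_simps power2_eq_square)
      also have "p^2 * v^2 + (q^2 - p^2) = q^2 * u^2"
      proof -
        have a: "v^2 = 1 - q^2" and b: "u^2 = 1 - p^2" using p1 by auto
        show ?thesis unfolding a b by (simp add: algebra_simps)
      qed
      finally show ?thesis using uq by (simp add: power2_eq_square)
    qed
    have "L^2 * u^2 = v^2" unfolding L_def using uq by (simp add: power_divide)
    hence "(norm (\<Psi> x))^2 = 1" unfolding nPsi S x(2) last using p1 by simp
    hence "norm (\<Psi> x) = 1" by (smt (verit) norm_ge_zero power2_eq_1_iff)
    moreover have "\<Psi> x $ l = sin \<beta>" using Psi_eq x last q_def by simp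
    ultimately show "\<Psi> x \<in> Eset \<beta>" unfolding Eq by simp
  qed
  have part_c: "\<forall>x \<in> Eset \<alpha>. \<forall>y \<in> Eset \<alpha>. norm (\<Psi> x - \<Psi> y) = lam \<alpha> \<beta> * norm (x - y)"
  proof (intro ballI)
    fix x y :: "real^('n::{finite,linorder})" assume "x \<in> Eset \<alpha>" "y \<in> Eset \<alpha>"
    hence xy: "x$l = y$l" unfolding Eq by simp
    have "\<Psi> x - \<Psi> y = L *\<^sub>R (x - y)"
      using xy by (simp add: vec_eq_iff Psi_eq algebra_simps)
    thus "norm (\<Psi> x - \<Psi> y) = lam \<alpha> \<beta> * norm (x - y)" using LL Lpos by simp
  qed
  have part_d: "\<forall>x \<in> cball 0 1. \<Psi> x \<in> sphere 0 1 \<longrightarrow> x \<in> Eset \<alpha>"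
  proof (intro ballI impI)
    fix x :: "real^('n::{finite,linorder})" assume xb: "x \<in> cball 0 1" and s: "\<Psi> x \<in> sphere 0 1"
    hence xn: "norm x \<le> 1" and ps: "norm (\<Psi> x) = 1" by auto
    have "(x$l - p)^2 \<le> 0" using ineq[OF xn] ps cpos
      by (smt (verit) mult_pos_pos zero_le_power2 power_one)
    hence t: "x$l = p" by simp
    have "(norm x)^2 \<le> 1" using xn by (simp add: abs_square_le_1)
    hence S1: "(\<Sum>i\<in>-{l}. (x$i)\<^sup>2) \<le> 1 - p^2" using nx[of x] t by simp
    have "1 = L^2 * (\<Sum>i\<in>-{l}. (x$i)\<^sup>2) + (L * M * p + K)^2" using nPsi[of x] ps t by simp
    also have "(L * M * p + K)^2 = 1 - L^2 * (1 - p^2)" using key[of p] by simp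
    finally have "L^2 * (\<Sum>i\<in>-{l}. (x$i)\<^sup>2) = L^2 * (1 - p^2)" by simp
    hence "(\<Sum>i\<in>-{l}. (x$i)\<^sup>2) = 1 - p^2" using Lpos by simp
    hence "(norm x)^2 = 1" using nx[of x] t by simp
    hence "norm x = 1" by (smt (verit) norm_ge_zero power2_eq_1_iff)
    thus "x \<in> Eset \<alpha>" unfolding Eq using t p_def by simp
  qed
  show ?thesis using part_a1 part_bij part_ball part_b part_c part_d by blast
qed

end
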